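(* Let $n$ be a positive integer, $0\le m\le\lfloor n/2\rfloor$ and $0\le k\le m$. Let $T_k$ be the Young tableau of shape $(n-k,k)$ whose first row contains $1,2,\dots,n-k$ and whose second row contains $n-k+1,\dots,n$ (so its columns of length two are $\{i,n-k+i\}$, $1\le i\le k$). Let $R(T_k)\subseteq S_n$ be the subgroup of permutations of $\{1,\dots,n\}$ preserving each row of $T_k$ as a set, and $C(T_k)\subseteq S_n$ the subgroup preserving each column as a set. Let $\Omega=\{n-m+1,\dots,n\}$. For $p\in R(T_k)$ and $q\in C(T_k)$ put $$V=\{\,i \mid i\le k,\ q(i)\ne i\,\},\qquad W=\{\,i\in\Omega \mid p(i)\notin \Omega\cup V\,\}.$$ Then the cardinality of $\Omega\cap (qp)(\Omega)$ equals $m-\#V-\#W$, where $(qp)(\Omega)=q(p(\Omega))$ is the image of the set $\Omega$.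
   Context: $\#X$ denotes the cardinality of a finite set $X$. Permutations act on $\{1,\dots,n\}$ and the product $qp$ means $q\circ p$ (first $p$, then $q$). *)

theory Defs
  imports "HOL-Combinatorics.Permutations"
begin

definition tab_rows :: "nat \<Rightarrow> nat \<Rightarrow> nat set set" where
  "tab_rows n k = {{1..n-k}, {n-k+1..n}}"

definition tab_cols :: "nat \<Rightarrow> nat \<Rightarrow> nat set set" where
  "tab_cols n k = (\<lambda>i. {i, n-k+i}) ` {1..k} \<union> (\<lambda>i. {i}) ` {k+1..n-k}"

definition row_group :: "nat \<Rightarrow> nat \<Rightarrow> (nat \<Rightarrow> nat) set" where
  "row_group n k = {p. p permutes {1..n} \<and> (\<forall>r\<in>tab_rows n k. p ` r = r)}"

definition col_group :: "nat \<Rightarrow> nat \<Rightarrow> (nat \<Rightarrow> nat) set" where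
  "col_group n k = {q. q permutes {1..n} \<and> (\<forall>c\<in>tab_cols n k. q ` c = c)}"

end

theory Submission
  imports Defs
begin

lemma img_filter: "f ` {x\<in>A. P (f x)} = {y \<in> f`A. P y}" by auto

theorem lemma2:
  fixes n m k :: nat and p q :: "nat \<Rightarrow> nat"
  assumes "n > 0" and "m \<le> n div 2" and "k \<le> m"
    and "p \<in> row_group n k" and "q \<in> col_group n k"
  defines "\<Omega> \<equiv> {n-m+1..n}"
  defines "V \<equiv> {i \<in> {1..k}. q i \<noteq> i}"
  defines "W \<equiv> {i \<in> \<Omega>. p i \<notin> \<Omega> \<union> V}"
  shows "int (card (\<Omega> \<inter> (q \<circ> p) ` \<Omega>)) = int m - int (card V) - int (card W)"
proof -
  have pp: "p permutes {1..n}" and pr1: "p ` {1..n-k} = {1..n-k}" and pr2: "p ` {n-k+1..n} = {n-k+1..n}"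
    using assms(4) unfolding row_group_def tab_rows_def by auto
  have qp: "q permutes {1..n}" and qc: "\<And>c. c \<in> tab_cols n k \<Longrightarrow> q ` c = c"
    using assms(5) unfolding col_group_def by auto
  have km: "k \<le> n - m" "m \<le> n - m" "k \<le> m" using assms(2,3) by auto
  have qinj: "inj q" using qp permutes_inj by blast
  have pinj: "inj p" using pp permutes_inj by blast
  have qfix: "q i = i" if "k < i" "i \<le> n-k" for i
  proof -
    have "{i} \<in> tab_cols n k" unfolding tab_cols_def using that by auto
    from qc[OF this] show ?thesis by auto
  qed
  have qlow: "(q i = i \<and> q (n-k+i) = n-k+i) \<or> (q i = n-k+i \<and> q (n-k+i) = i)"
    if "1 \<le> i" "i \<le> k" for i
  proof -
    have "{i, n-k+i} \<in> tab_cols n k" unfolding tab_cols_def using that by auto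
    from qc[OF this] have e: "q ` {i, n-k+i} = {i, n-k+i}" .
    have ne: "i \<noteq> n-k+i" using km that assms(1,3) by auto
    have "q i \<noteq> q (n-k+i)" using qinj ne by (meson injD)
    with e show ?thesis by (auto simp: doubleton_eq_iff)
  qed
  have p1: "p x \<in> {1..n-k}" if "x \<in> {1..n-k}" for x using pr1 that by blast
  have p2: "p x \<in> {n-k+1..n}" if "x \<in> {n-k+1..n}" for x using pr2 that by blast
  define S where "S = {i\<in>\<Omega>. q (p i) \<in> \<Omega>}"
  define S' where "S' = {i\<in>\<Omega>. q (p i) \<notin> \<Omega>}"
  define X where "X = {i\<in>{n-k+1..n}. q (p i) \<notin> \<Omega>}"
  have "(q \<circ> p) ` S = \<Omega> \<inter> (q \<circ> p) ` \<Omega>" unfolding S_def by auto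
  moreover have "inj_on (q \<circ> p) S" using qinj pinj by (meson inj_compose inj_on_subset subset_UNIV)
  ultimately have c1: "card (\<Omega> \<inter> (q \<circ> p) ` \<Omega>) = card S" by (metis card_image)
  have cO: "card \<Omega> = m" unfolding \<Omega>_def using km by auto
  have "\<Omega> = S \<union> S'" "S \<inter> S' = {}" unfolding S_def S'_def by auto
  hence c2: "card S + card S' = m" using cO unfolding \<Omega>_def
    by (metis card_Un_disjoint finite_Un finite_atLeastAtMost)
  have SX: "S' = X \<union> W"
  proof (rule set_eqI)
    fix x
    show "x \<in> S' \<longleftrightarrow> x \<in> X \<union> W"
    proof (cases "x \<in> \<Omega>")
      case False thus ?thesis unfolding S'_def X_def W_def \<Omega>_def using km assms(3) by auto
    next
      case True
      show ?thesis
      proof (cases "x > n-k")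
        case True
        hence "p x \<in> {n-k+1..n}" using p2 \<open>x \<in> \<Omega>\<close> unfolding \<Omega>_def by auto
        hence "p x \<in> \<Omega>" unfolding \<Omega>_def using assms(3) by auto
        thus ?thesis using True \<open>x \<in> \<Omega>\<close> unfolding S'_def X_def W_def \<Omega>_def by auto
      next
        case False
        hence xA: "x \<in> {1..n-k}" "x \<notin> X" using \<open>x \<in> \<Omega>\<close> unfolding \<Omega>_def X_def by auto
        define y where "y = p x"
        have y: "y \<in> {1..n-k}" using p1 xA y_def by auto
        have "q y \<notin> \<Omega> \<longleftrightarrow> y \<notin> \<Omega> \<union> V"
        proof (cases "y \<le> k")
          case True
          have "y \<notin> \<Omega>" "n-k+y \<in> \<Omega>" using True y km unfolding \<Omega>_def by auto
          thus ?thesis using qlow[of y] True y unfolding V_def by auto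
        next
          case False
          thus ?thesis using qfix[of y] y unfolding V_def by auto
        qed
        thus ?thesis using xA True unfolding S'_def W_def y_def by auto
      qed
    qed
  qed
  have XW: "X \<inter> W = {}" unfolding X_def W_def \<Omega>_def using p2 assms(3) by fastforce
  have cS': "card S' = card X + card W" unfolding SX
    by (rule card_Un_disjoint) (use XW in \<open>auto simp: X_def W_def \<Omega>_def\<close>)
  have "p ` X = {y\<in>{n-k+1..n}. q y \<notin> \<Omega>}" unfolding X_def img_filter[of p _ "\<lambda>y. q y \<notin> \<Omega>"] pr2 by simp
  also have "\<dots> = (\<lambda>j. n-k+j) ` V"
  proof (rule set_eqI)
    fix y
    show "y \<in> {y\<in>{n-k+1..n}. q y \<notin> \<Omega>} \<longleftrightarrow> y \<in> (\<lambda>j. n-k+j) ` V"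
    proof
      assume a: "y \<in> {y\<in>{n-k+1..n}. q y \<notin> \<Omega>}"
      define j where "j = y - (n-k)"
      have j: "1 \<le> j" "j \<le> k" "y = n-k+j" using a km unfolding j_def by auto
      have "q y \<noteq> y" using a j km unfolding \<Omega>_def by auto
      hence "q j \<noteq> j" using qlow[OF j(1,2)] j(3) by auto
      thus "y \<in> (\<lambda>j. n-k+j) ` V" unfolding V_def using j by auto
    next
      assume "y \<in> (\<lambda>j. n-k+j) ` V"
      then obtain j where j: "1 \<le> j" "j \<le> k" "y = n-k+j" "q j \<noteq> j" unfolding V_def by auto
      hence "q y = j" using qlow[OF j(1,2)] by auto
      moreover have "j \<notin> \<Omega>" using j km unfolding \<Omega>_def by auto
      ultimately show "y \<in> {y\<in>{n-k+1..n}. q y \<notin> \<Omega>}" using j km by auto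
    qed
  qed
  finally have "card (p ` X) = card ((\<lambda>j. n-k+j) ` V)" by simp
  hence cX: "card X = card V"
    by (metis card_image inj_on_subset pinj subset_UNIV inj_on_def add_left_cancel)
  show ?thesis using c1 c2 cS' cX by simp
qed

end
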